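(* Let $\mu\in\mathbb{Z}$ and let $S_n(z)=S_n(z;\mu)$, $n\ge -1$, be defined by $S_{-1}=S_0=1$ and $$S_{n+1}S_{n-1}=-z\left[S_n\frac{d^2S_n}{dz^2}-\left(\frac{dS_n}{dz}\right)^2\right]-S_n\frac{dS_n}{dz}+(z+\mu)S_n^2,\qquad n\ge0.$$ Then for all $n>|\mu|$: (a) $z=0$ is a root of $S_n$ of order $\tfrac12(n-|\mu|)(n-|\mu|+1)$; (b) $S_n$ is a monic polynomial in $z$ of degree $\tfrac12n(n+1)$; (c) all other (nonzero) roots of $S_n$ are simple.
   Context: The $S_n(z;\mu)$ are the Umemura polynomials associated with the third Painlevé equation, defined a priori as rational functions by the recurrence in the claim. *)

theory Defs
  imports Complex_Main "HOL-Computational_Algebra.Computational_Algebra"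
    "HOL-Computational_Algebra.Normalized_Fraction" "HOL-Computational_Algebra.Field_as_Ring"
begin

definition rderiv :: "complex poly fract \<Rightarrow> complex poly fract" where
  "rderiv r = (case quot_of_fract r of (p, q) \<Rightarrow>
      Fract (pderiv p * q - p * pderiv q) (q * q))"

text \<open>U mu k = S_(k-1)(z; mu), i.e. U mu 0 = S_(-1), U mu 1 = S_0, and the
  Toda-type recurrence
  S_(n+1) S_(n-1) = -z (S_n S_n'' - (S_n')^2) - S_n S_n' + (z + mu) S_n^2
  solved for S_(n+1) as a rational function.\<close>

fun U :: "int \<Rightarrow> nat \<Rightarrow> complex poly fract" where
  "U mu 0 = 1"
| "U mu (Suc 0) = 1"
| "U mu (Suc (Suc n)) =
     (let s = U mu (Suc n); s' = rderiv s; s'' = rderiv s';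
          zz = to_fract [:0, 1:]
      in (- zz * (s * s'' - s' ^ 2) - s * s' + (zz + of_int mu) * s ^ 2) / U mu n)"

definition Umemura_S :: "int \<Rightarrow> int \<Rightarrow> complex poly fract" where
  "Umemura_S mu n = U mu (nat (n + 1))"

end

theory Submission
  imports Defs
begin


definition pz :: "complex poly" where "pz = [:0, 1:]"

definition Phi :: "int \<Rightarrow> complex poly \<Rightarrow> complex poly" where
  "Phi mu B = - pz * (B * pderiv (pderiv B) - (pderiv B)^2) - B * pderiv B
      + (pz + [:of_int mu:]) * B^2"

lemma rderiv_to_fract: "rderiv (to_fract p) = to_fract (pderiv p)"
  by (simp add: rderiv_def Fract_conv_to_fract)

lemma to_fract_Phi:
  "to_fract (Phi mu B) =
   (let s = to_fract B; s' = rderiv s; s'' = rderiv s';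
          zz = to_fract [:0, 1:]
      in (- zz * (s * s'' - s' ^ 2) - s * s' + (zz + of_int mu) * s ^ 2))"
proof -
  have h: "to_fract (of_int i :: complex poly) = of_int i" for i :: int
    by (induct i rule: int_induct[where k=0]) simp_all
  have "(of_int mu :: complex poly fract) = to_fract [:of_int mu:]"
    using h[of mu] by (simp add: of_int_poly)
  then show ?thesis by (simp only: Phi_def to_fract_add to_fract_diff to_fract_mult
     to_fract_uminus power2_eq_square Let_def rderiv_to_fract pz_def)
qed

lemma U_step:
  assumes "U mu k = to_fract A" "U mu (Suc k) = to_fract B" "A \<noteq> 0" "A * C = Phi mu B"
  shows "U mu (Suc (Suc k)) = to_fract C"
proof -
  have "U mu (Suc (Suc k)) = to_fract (Phi mu B) / to_fract A"
    using assms(1,2) by (simp add: to_fract_Phi Let_def)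
  also have "\<dots> = to_fract C" using assms(3,4)
    by (metis nonzero_mult_div_cancel_left to_fract_eq_0_iff to_fract_mult)
  finally show ?thesis .
qed



lemma pderiv_pz [simp]: "pderiv pz = 1"
  by (simp add: pz_def pderiv_pCons)

lemma H_step:
  fixes A B C :: "complex poly" and N :: "complex poly"
  assumes R: "A * pderiv C - pderiv A * C = N * B^2" and N: "pderiv N = 0"
    and H: "A * pderiv (pderiv B) - 2 * pderiv A * pderiv B + pderiv (pderiv A) * B = 0"
    and A: "A \<noteq> 0"
  shows "B * pderiv (pderiv C) - 2 * pderiv B * pderiv C + pderiv (pderiv B) * C = 0"
proof -
  have "pderiv (A * pderiv C - pderiv A * C) = pderiv (N * B^2)" using R by simp
  then have R': "A * pderiv (pderiv C) - pderiv (pderiv A) * C = 2 * N * B * pderiv B"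
    by (simp add: pderiv_mult pderiv_diff N power2_eq_square algebra_simps)
  have "A * (B * pderiv (pderiv C) - 2 * pderiv B * pderiv C + pderiv (pderiv B) * C)
     = B * (A * pderiv (pderiv C) - pderiv (pderiv A) * C - 2 * N * B * pderiv B)
       - 2 * pderiv B * (A * pderiv C - pderiv A * C - N * B^2)
       + C * (A * pderiv (pderiv B) - 2 * pderiv A * pderiv B + pderiv (pderiv A) * B)"
    by (simp add: algebra_simps power2_eq_square)
  also have "\<dots> = 0" using R R' H by simp
  finally show ?thesis using A by simp
qed

lemma Q_step:
  fixes A B C :: "complex poly" and N :: "complex poly"
  assumes R: "A * pderiv C - pderiv A * C = N * B^2" and N: "pderiv N = 0"
    and T: "A * C = Phi mu B"
    and H1: "B * pderiv (pderiv C) - 2 * pderiv B * pderiv C + pderiv (pderiv B) * C = 0"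
    and B: "B \<noteq> 0"
  shows "B * pderiv (Phi mu C) - 2 * pderiv B * Phi mu C = (N + 2) * B * C^2"
proof -
  define T where "T = A * C - Phi mu B"
  define Rx where "Rx = A * pderiv C - pderiv A * C - N * B^2"
  define H where "H = B * pderiv (pderiv C) - 2 * pderiv B * pderiv C + pderiv (pderiv B) * C"
  have T0: "T = 0" "pderiv T = 0" using T by (simp_all add: T_def)
  have R0: "Rx = 0" using R by (simp add: Rx_def)
  have H0: "H = 0" "pderiv H = 0" using H1 by (simp_all add: H_def)
  have "B * (B * pderiv (Phi mu C) - 2 * pderiv B * Phi mu C - (N + 2) * B * C^2)
     = C * C * Rx + C * (-2 * pderiv C * T + C * pderiv T) - 2 * B * C * H
       - pz * (B * C * pderiv H - pderiv B * C * H - B * pderiv C * H)"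
    unfolding T_def Rx_def H_def Phi_def
    by (simp add: pderiv_mult pderiv_diff pderiv_add pderiv_minus pderiv_smult N power2_eq_square algebra_simps)
  also have "\<dots> = 0" using T0 R0 H0 by simp
  finally show ?thesis using B by simp
qed



lemma h_pderiv_power_gen:
  fixes h :: "complex poly"
  assumes "pderiv h = 1"
  shows "h * pderiv (h^x) = of_nat x * h^x"
proof (cases x)
  case 0 then show ?thesis by simp
next
  case (Suc m) then show ?thesis
    using assms by (simp add: pderiv_power_Suc of_nat_poly algebra_simps del: power_Suc)
      (simp add: power_Suc)
qed

lemma h_pderiv_decomp_gen:
  fixes X1 h :: "complex poly"
  assumes "pderiv h = 1"
  shows "h * pderiv (h^x * X1) = h^x * (of_nat x * X1 + h * pderiv X1)"
proof -
  have "h * pderiv (h^x * X1)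
      = (h * pderiv (h^x)) * X1 + h^x * h * pderiv X1"
    by (simp add: pderiv_mult algebra_simps)
  also have "\<dots> = h^x * (of_nat x * X1 + h * pderiv X1)"
    by (simp add: h_pderiv_power_gen[OF assms] algebra_simps)
  finally show ?thesis .
qed

lemma pderiv_h: "pderiv [:-a,1:] = (1 :: complex poly)"
  by (simp add: pderiv_pCons)

lemma order_wronsk:
  fixes X Y :: "complex poly"
  assumes X: "X \<noteq> 0" and Y: "Y \<noteq> 0" and xy: "order a X + order a Y \<ge> 1"
    and c: "\<alpha> * of_nat (order a X) + \<beta> * of_nat (order a Y) \<noteq> 0"
  shows "[:\<alpha>:] * (pderiv X * Y) + [:\<beta>:] * (X * pderiv Y) \<noteq> 0 \<and>
    order a ([:\<alpha>:] * (pderiv X * Y) + [:\<beta>:] * (X * pderiv Y)) = order a X + order a Y - 1"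
proof -
  define h where "h = [:-a,1:]"
  define x where "x = order a X"
  define y where "y = order a Y"
  obtain X1 where X1: "X = h^x * X1" "\<not> h dvd X1"
    using order_decomp[OF X, of a] unfolding h_def x_def by auto
  obtain Y1 where Y1: "Y = h^y * Y1" "\<not> h dvd Y1"
    using order_decomp[OF Y, of a] unfolding h_def y_def by auto
  define E where "E = [:\<alpha>:] * (pderiv X * Y) + [:\<beta>:] * (X * pderiv Y)"
  define Z where "Z = [:\<alpha> * of_nat x + \<beta> * of_nat y:] * X1 * Y1
      + h * ([:\<alpha>:] * pderiv X1 * Y1 + [:\<beta>:] * X1 * pderiv Y1)"
  have ph: "pderiv h = 1" by (simp add: h_def pderiv_h)
  have dX: "h * pderiv X = h^x * (of_nat x * X1 + h * pderiv X1)"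
    using h_pderiv_decomp_gen[OF ph, of x X1] X1(1) by simp
  have dY: "h * pderiv Y = h^y * (of_nat y * Y1 + h * pderiv Y1)"
    using h_pderiv_decomp_gen[OF ph, of y Y1] Y1(1) by simp
  have "h * E = [:\<alpha>:] * ((h * pderiv X) * Y) + [:\<beta>:] * (X * (h * pderiv Y))"
    unfolding E_def by (simp add: algebra_simps)
  also have "\<dots> = [:\<alpha>:] * ((h^x * (of_nat x * X1 + h * pderiv X1)) * Y)
      + [:\<beta>:] * (X * (h^y * (of_nat y * Y1 + h * pderiv Y1)))"
    by (simp only: dX dY)
  also have "\<dots> = h^(x+y) * Z"
    unfolding Z_def by (simp add: X1(1) Y1(1) algebra_simps power_add of_nat_poly smult_add_left)
  finally have hE: "h * E = h^(x+y) * Z" .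
  have pX1: "poly X1 a \<noteq> 0" using X1(2) by (simp add: h_def poly_eq_0_iff_dvd)
  have pY1: "poly Y1 a \<noteq> 0" using Y1(2) by (simp add: h_def poly_eq_0_iff_dvd)
  have ha: "poly h a = 0" by (simp add: h_def)
  have "poly Z a = (\<alpha> * of_nat x + \<beta> * of_nat y) * poly X1 a * poly Y1 a"
    unfolding Z_def by (simp add: ha)
  then have pZ: "poly Z a \<noteq> 0" using pX1 pY1 c by (simp add: x_def y_def)
  then have Z0: "Z \<noteq> 0" by auto
  have hne: "h \<noteq> 0" by (simp add: h_def)
  have E0: "E \<noteq> 0" using hE Z0 hne by auto
  have "order a (h * E) = x + y"
    using hE Z0 hne by (simp add: order_mult h_def order_power_n_n order_0I[OF pZ])
  moreover have "order a (h * E) = 1 + order a E"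
  proof -
    have oh: "order a h = 1" using order_power_n_n[of a 1] by (simp add: h_def)
    have "h * E \<noteq> 0" using E0 hne by simp
    then show ?thesis using order_mult[of h E a] oh by simp
  qed
  ultimately show ?thesis using E0 unfolding E_def x_def y_def by simp
qed

lemma order_add_less:
  fixes p q :: "complex poly"
  assumes p: "p \<noteq> 0" and lt: "q = 0 \<or> order a p < order a q"
  shows "order a (p + q) = order a p"
proof -
  have d1: "[:-a,1:]^order a p dvd p" by (rule order_1)
  have d2: "[:-a,1:]^order a p dvd q"
    using lt by (metis dvd_0_right order_divides less_imp_le)
  have pq: "p + q \<noteq> 0"
  proof
    assume "p + q = 0" then have "q = -p" by (metis add.commute eq_neg_iff_add_eq_0)
    then show False using lt p by auto
  qed
  have "order a p \<le> order a (p + q)"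
    using d1 d2 pq by (metis dvd_add order_divides)
  moreover have "\<not> order a p < order a (p + q)"
  proof
    assume "order a p < order a (p + q)"
    then have "[:-a,1:]^Suc (order a p) dvd p + q" using order_divides by (metis Suc_leI)
    moreover have "[:-a,1:]^Suc (order a p) dvd q"
      using lt by (metis dvd_0_right order_divides Suc_leI)
    ultimately have "[:-a,1:]^Suc (order a p) dvd p" by (metis add_diff_cancel_right' dvd_diff)
    then show False using order_2[OF p] by blast
  qed
  ultimately show ?thesis by simp
qed



lemma root_exists:
  fixes Q :: "complex poly"
  assumes "degree Q > 0"
  shows "\<exists>a. poly Q a = 0"
  by (rule fundamental_theorem_of_algebra_alt) (use assms in auto)

lemma dvd_step:
  fixes A B PB Nn :: "complex poly"
  assumes A: "A \<noteq> 0" and B: "B \<noteq> 0"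
    and Qe: "A * pderiv PB - 2 * pderiv A * PB = Nn * A * B^2"
    and Nn: "pderiv Nn = 0" "Nn \<noteq> 0"
    and ord: "\<And>a. order a A \<le> 2 * order a B + 1"
  shows "A dvd PB"
proof -
  define g where "g = gcd A PB"
  have g0: "g \<noteq> 0" using A by (simp add: g_def)
  obtain Q where AQ: "A = g * Q" unfolding g_def by (metis dvd_def gcd_dvd1)
  obtain P where PP: "PB = g * P" unfolding g_def by (metis dvd_def gcd_dvd2)
  have Q0: "Q \<noteq> 0" using A AQ by auto
  have cop: "coprime Q P"
  proof -
    have "Q = A div g" using AQ g0 by simp
    moreover have "P = PB div g" using PP g0 by simp
    ultimately show ?thesis using div_gcd_coprime[of A PB] A unfolding g_def by simp
  qed
  have eq0: "g * (Q * (pderiv g * P + g * pderiv P) - 2 * (pderiv g * Q + g * pderiv Q) * P)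
        = g * (Nn * Q * B^2)"
    using Qe unfolding AQ PP by (simp add: pderiv_mult algebra_simps)
  then have eq1: "Q * (pderiv g * P + g * pderiv P) - 2 * (pderiv g * Q + g * pderiv Q) * P
        = Nn * Q * B^2" using g0 by simp
  have "Q * (g * pderiv P - Nn * B^2) - P * (2 * (pderiv Q * g) + (Q * pderiv g))
     = (Q * (pderiv g * P + g * pderiv P) - 2 * (pderiv g * Q + g * pderiv Q) * P) - Nn * Q * B^2"
    by (simp add: algebra_simps)
  also have "\<dots> = 0" using eq1 by simp
  finally have eq2: "P * (2 * (pderiv Q * g) + (Q * pderiv g)) = Q * (g * pderiv P - Nn * B^2)"
    by simp
  have c2: "[:2:] = (2 :: complex poly)" by (simp add: numeral_poly)
  have eq: "P * ([:2:] * (pderiv Q * g) + [:1:] * (Q * pderiv g)) = Q * (g * pderiv P - Nn * B^2)"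
    using eq2 unfolding c2 by (simp add: one_pCons[symmetric])
  have "is_unit Q"
  proof (rule ccontr)
    assume nu: "\<not> is_unit Q"
    then have "degree Q > 0" using Q0 is_unit_iff_degree by auto
    then obtain a where Qa: "poly Q a = 0" using root_exists by blast
    define kQ where "kQ = order a Q"
    define j where "j = order a g"
    define b where "b = order a B"
    have kQ1: "kQ \<ge> 1" using Qa Q0 order_root unfolding kQ_def by (metis less_one not_le)
    have Pa: "poly P a \<noteq> 0"
    proof
      assume "poly P a = 0"
      then have "[:-a,1:] dvd P" "[:-a,1:] dvd Q" using Qa by (simp_all add: poly_eq_0_iff_dvd)
      then have "is_unit [:-a,1:]" using cop by (meson coprime_common_divisor)
      then show False using is_unit_iff_degree[of "[:-a,1:]"] by simp
    qed
    have P0: "P \<noteq> 0" using Pa by auto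
    have W: "[:2:] * (pderiv Q * g) + [:1:] * (Q * pderiv g) \<noteq> 0 \<and>
       order a ([:2:] * (pderiv Q * g) + [:1:] * (Q * pderiv g)) = kQ + j - 1"
    proof -
      have e: "2 * complex_of_nat kQ + complex_of_nat j = of_nat (2*kQ+j)" by simp
      have "2*kQ+j \<noteq> 0" using kQ1 by simp
      then have cne: "2 * complex_of_nat kQ + complex_of_nat j \<noteq> 0"
        unfolding e of_nat_eq_0_iff .
      show ?thesis
        using order_wronsk[of Q g a 2 1] Q0 g0 kQ1 cne unfolding kQ_def j_def by simp
    qed
    define W where "W = [:2:] * (pderiv Q * g) + [:1:] * (Q * pderiv g)"
    define V where "V = g * pderiv P - Nn * B^2"
    have PW: "P * W \<noteq> 0" using W P0 unfolding W_def by simp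
    have oPW: "order a (P * W) = kQ + j - 1"
      using PW W order_mult[of P W a] order_0I[OF Pa] unfolding W_def by simp
    have eqV: "P * W = Q * V" using eq unfolding W_def V_def .
    have V0: "V \<noteq> 0" using PW eqV by auto
    have oQV: "order a (Q * V) = kQ + order a V"
      using order_mult[of Q V a] Q0 V0 unfolding kQ_def by simp
    have "kQ + j - 1 = kQ + order a V" using oPW oQV eqV by simp
    then have jV: "order a V + 1 = j" using kQ1 by linarith
    have "2 * b < j"
    proof (rule ccontr)
      assume "\<not> 2 * b < j"
      then have jb: "j \<le> 2 * b" by simp
      have "[:-a,1:]^j dvd g" unfolding j_def by (rule order_1)
      then have d1: "[:-a,1:]^j dvd g * pderiv P" by simp
      have hb: "[:-a,1:]^b dvd B" unfolding b_def by (rule order_1)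
      have "[:-a,1:]^b * [:-a,1:]^b dvd B * B" using mult_dvd_mono[OF hb hb] .
      then have "[:-a,1:]^(2*b) dvd B^2" by (simp only: power2_eq_square mult_2 power_add)
      then have "[:-a,1:]^j dvd B^2" using jb by (meson le_imp_power_dvd dvd_trans)
      then have d2: "[:-a,1:]^j dvd Nn * B^2" by simp
      have "[:-a,1:]^j dvd V" unfolding V_def using d1 d2 by (rule dvd_diff)
      then have "j \<le> order a V" using V0 order_divides by blast
      then show False using jV by simp
    qed
    then have "order a A \<ge> 2 * b + 2" using AQ g0 Q0 kQ1 order_mult[of g Q a]
      unfolding j_def kQ_def by simp
    then show False using ord[of a] unfolding b_def by simp
  qed
  then show ?thesis using AQ PP
    by (metis dvd_mult_left mult.commute unit_dvd_iff dvd_mult_unit_iff' dvd_refl)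
qed



lemma pderiv_nz_root:
  fixes B :: "complex poly"
  assumes "B \<noteq> 0" "poly B a = 0"
  shows "pderiv B \<noteq> 0"
proof
  assume "pderiv B = 0"
  then have "degree B = 0" by (simp add: pderiv_eq_0_iff)
  then obtain c where "B = [:c:]" by (metis degree_eq_zeroE)
  then show False using assms by simp
qed

lemma simple_root:
  fixes A B :: "complex poly"
  assumes B: "B \<noteq> 0"
    and H: "A * pderiv (pderiv B) - 2 * pderiv A * pderiv B + pderiv (pderiv A) * B = 0"
    and Aa: "poly A a \<noteq> 0" and Ba: "poly B a = 0"
  shows "order a B = 1"
proof (rule ccontr)
  assume ne: "order a B \<noteq> 1"
  define m where "m = order a B"
  have m1: "m \<ge> 1" using B Ba order_root unfolding m_def by (metis less_one not_le)
  then have m2: "m \<ge> 2" using ne unfolding m_def by simp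
  have B1: "pderiv B \<noteq> 0" using pderiv_nz_root[OF B Ba] .
  have o1: "order a B = Suc (order a (pderiv B))" using order_pderiv[OF B Ba] .
  have B1a: "poly (pderiv B) a = 0" using o1 m2 B1 order_root unfolding m_def by fastforce
  have B2: "pderiv (pderiv B) \<noteq> 0" using pderiv_nz_root[OF B1 B1a] .
  have o2: "order a (pderiv B) = Suc (order a (pderiv (pderiv B)))" using order_pderiv[OF B1 B1a] .
  have A0: "A \<noteq> 0" using Aa by auto
  have eq: "A * pderiv (pderiv B) = 2 * pderiv A * pderiv B - pderiv (pderiv A) * B"
    using H by (simp add: algebra_simps eq_diff_eq)
  have d1: "[:-a,1:]^(m-1) dvd pderiv B" using o1 order_1[of a "pderiv B"] unfolding m_def by simp
  have d2: "[:-a,1:]^(m-1) dvd B"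
    using order_1[of a B] unfolding m_def by (meson diff_le_self le_imp_power_dvd dvd_trans)
  have "[:-a,1:]^(m-1) dvd 2 * pderiv A * pderiv B - pderiv (pderiv A) * B"
    using d1 d2 by (simp add: dvd_diff)
  then have "[:-a,1:]^(m-1) dvd A * pderiv (pderiv B)" using eq by simp
  moreover have nz: "A * pderiv (pderiv B) \<noteq> 0" using A0 B2 by simp
  ultimately have "m - 1 \<le> order a (A * pderiv (pderiv B))"
    using order_divides[of a "m-1" "A * pderiv (pderiv B)"] by simp
  moreover have "order a (A * pderiv (pderiv B)) = m - 2"
    using order_mult[of A "pderiv (pderiv B)" a] A0 B2 order_0I[OF Aa] o1 o2 unfolding m_def by simp
  ultimately show False using m2 by simp
qed

lemma phi_dvd:
  assumes "pz^(Suc m) dvd B"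
  shows "pz^(2*m+1) dvd Phi mu B"
proof -
  obtain q where q: "B = pz^(Suc m) * q" using assms by (metis dvd_def)
  have pz0: "pz \<noteq> 0" by (simp add: pz_def)
  define r where "r = of_nat (Suc m) * q + pz * pderiv q"
  have "pz * pderiv B = pz^(Suc m) * r"
    unfolding q r_def by (rule h_pderiv_decomp_gen) simp
  then have d1: "pderiv B = pz^m * r" using pz0 by (simp add: mult.assoc)
  define s where "s = of_nat m * r + pz * pderiv r"
  have d2: "pz * pderiv (pderiv B) = pz^m * s"
    unfolding d1 s_def by (rule h_pderiv_decomp_gen) simp
  have "Phi mu B = -(B * (pz * pderiv (pderiv B))) + pz * (pderiv B)^2 - B * pderiv B
      + (pz + [:of_int mu:]) * B^2"
    unfolding Phi_def by (simp add: algebra_simps)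
  also have "\<dots> = -(B * (pz^m * s)) + pz * (pz^m * r)^2 - B * (pz^m * r)
      + (pz + [:of_int mu:]) * B^2"
    unfolding d2 by (simp only: d1)
  also have "\<dots> = pz^(2*m+1) * (- q * s + r^2 - q * r + (pz + [:of_int mu:]) * pz * q^2)"
  proof -
    have pw: "pz^(2*m+1) = pz * (pz^m * pz^m)" by (simp add: mult_2 power_add)
    show ?thesis unfolding q pw power_Suc by (simp add: algebra_simps power2_eq_square)
  qed
  finally show ?thesis by simp
qed

lemma phi_degree:
  fixes B :: "complex poly"
  assumes B: "B \<noteq> 0"
  shows "degree (Phi mu B) = 2 * degree B + 1 \<and> lead_coeff (Phi mu B) = lead_coeff B ^ 2"
proof -
  define d where "d = degree B"
  define R where "R = - pz * (B * pderiv (pderiv B) - (pderiv B)^2) - B * pderiv B + [:of_int mu:] * B^2"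
  have Pe: "Phi mu B = R + pz * B^2" unfolding Phi_def R_def by (simp add: algebra_simps)
  have dz: "degree (pz * B^2) = 2 * d + 1"
    using B by (simp add: pz_def degree_mult_eq d_def degree_power_eq)
  have lz: "lead_coeff (pz * B^2) = lead_coeff B ^ 2"
    by (simp add: pz_def lead_coeff_mult lead_coeff_power)
  have dR: "degree R \<le> 2 * d"
  proof (cases "d = 0")
    case True
    then have "pderiv B = 0" by (simp add: pderiv_eq_0_iff d_def)
    then have "R = [:of_int mu:] * B^2" by (simp add: R_def)
    then show ?thesis using True B
      by (simp add: degree_mult_eq degree_power_eq d_def)
  next
    case False
    have e1: "degree (pderiv B) = d - 1" by (simp add: degree_pderiv d_def)
    have e2: "degree (pderiv (pderiv B)) = d - 2" by (simp add: degree_pderiv d_def numeral_2_eq_2)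
    have t1: "degree (B * pderiv (pderiv B)) \<le> 2 * d - 1"
      using degree_mult_le[of B "pderiv (pderiv B)"] e2 False unfolding d_def by linarith
    have t2: "degree ((pderiv B)^2) \<le> 2 * d - 1"
      using degree_power_le[of "pderiv B" 2] e1 False by linarith
    have t3: "degree (B * pderiv (pderiv B) - (pderiv B)^2) \<le> 2 * d - 1"
      using t1 t2 degree_diff_le by blast
    have t4: "degree (- pz * (B * pderiv (pderiv B) - (pderiv B)^2)) \<le> 2 * d"
      using degree_mult_le[of "- pz" "B * pderiv (pderiv B) - (pderiv B)^2"] t3 False
      by (simp add: pz_def)
    have t5: "degree (B * pderiv B) \<le> 2 * d"
      using degree_mult_le[of B "pderiv B"] e1 unfolding d_def by linarith
    have t6: "degree ([:of_int mu:] * B^2) \<le> 2 * d"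
      using degree_mult_le[of "[:of_int mu:]" "B^2"] degree_power_le[of B 2] unfolding d_def
      by simp
    show ?thesis unfolding R_def
      by (meson degree_add_le degree_diff_le t4 t5 t6)
  qed
  have lt: "degree R < degree (pz * B^2)" using dR dz by simp
  have a1: "degree (R + pz*B^2) = 2*d+1" using degree_add_eq_right[OF lt] dz by simp
  have a2: "lead_coeff (R + pz*B^2) = lead_coeff B ^ 2"
    by (rule trans[OF lead_coeff_add_le[OF lt] lz])
  show ?thesis unfolding Pe using a1 a2 unfolding d_def by simp
qed



definition tri :: "nat \<Rightarrow> nat" where "tri j = j * Suc j div 2"
definition ordS :: "nat \<Rightarrow> nat \<Rightarrow> nat" where "ordS m k = tri (k - Suc m)"
definition degS :: "nat \<Rightarrow> nat" where "degS k = tri (k - 1)"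

lemma tri_0 [simp]: "tri 0 = 0" by (simp add: tri_def)
lemma tri_Suc: "tri (Suc j) = tri j + Suc j"
proof -
  have "Suc j * Suc (Suc j) = j * Suc j + 2 * Suc j" by simp
  then show ?thesis unfolding tri_def by simp
qed

lemma ordS_Suc: "ordS m (Suc k) = ordS m k + (k - m)"
proof (cases "k \<ge> Suc m")
  case True
  then have "Suc k - Suc m = Suc (k - Suc m)" by simp
  then show ?thesis using True unfolding ordS_def by (simp add: tri_Suc)
next
  case False
  then show ?thesis unfolding ordS_def by simp
qed

lemma degS_Suc: "degS (Suc k) = degS k + k"
  by (cases k) (simp_all add: degS_def tri_Suc)

lemma ordS_small: "k \<le> Suc m \<Longrightarrow> ordS m k = 0"
  by (simp add: ordS_def)

lemma ordS_mono: "ordS m k \<le> ordS m (Suc k)"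
  by (simp add: ordS_Suc)

lemma ordS_rec: "k \<ge> m \<Longrightarrow> ordS m (Suc (Suc k)) + ordS m k = 2 * ordS m (Suc k) + 1"
  by (simp add: ordS_Suc)

lemma ordS_strict: "k > m \<Longrightarrow> ordS m k < ordS m (Suc k)"
  by (simp add: ordS_Suc)

lemma degS_rec: "degS (Suc (Suc k)) + degS k = 2 * degS (Suc k) + 1"
  by (simp add: degS_Suc)

lemma poly_Phi_0: "poly (Phi mu B) 0 = poly B 0 * (of_int mu * poly B 0 - poly (pderiv B) 0)"
  by (simp add: Phi_def pz_def power2_eq_square algebra_simps)

lemma poly_Phi_root: "poly B a = 0 \<Longrightarrow> poly (Phi mu B) a = a * poly (pderiv B) a ^ 2"
  by (simp add: Phi_def pz_def power2_eq_square algebra_simps)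

definition Inv :: "int \<Rightarrow> nat \<Rightarrow> complex poly \<Rightarrow> complex poly \<Rightarrow> bool" where
  "Inv mu k A B \<longleftrightarrow> A \<noteq> 0 \<and> B \<noteq> 0 \<and>
    A * pderiv (pderiv B) - 2 * pderiv A * pderiv B + pderiv (pderiv A) * B = 0 \<and>
    A * pderiv (Phi mu B) - 2 * pderiv A * Phi mu B = of_nat (2*k+1) * A * B^2 \<and>
    (\<forall>a. a \<noteq> 0 \<and> poly A a = 0 \<longrightarrow> poly B a \<noteq> 0) \<and>
    (\<forall>a. a \<noteq> 0 \<longrightarrow> order a A \<le> 1) \<and>
    order 0 A = ordS (nat \<bar>mu\<bar>) k \<and> order 0 B = ordS (nat \<bar>mu\<bar>) (Suc k) \<and>
    (k \<le> nat \<bar>mu\<bar> \<longrightarrow>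
       (of_int mu * poly B 0 - poly (pderiv B) 0) * (of_int mu * poly A 0 - poly (pderiv A) 0)
         = (of_int mu ^ 2 - of_nat k ^ 2) * poly A 0 * poly B 0 \<and>
       (1 \<le> k \<longrightarrow> of_int mu * poly A 0 - poly (pderiv A) 0 \<noteq> 0)) \<and>
    (k = 0 \<longrightarrow> A = 1 \<and> B = 1) \<and>
    lead_coeff A = 1 \<and> lead_coeff B = 1 \<and> degree A = degS k \<and> degree B = degS (Suc k)"

lemma Inv_0: "Inv mu 0 1 1"
  unfolding Inv_def
  by (simp add: Phi_def ordS_def degS_def pz_def pderiv_pCons power2_eq_square)



lemma Inv_step:
  assumes inv: "Inv mu k A B"
  shows "\<exists>C. A * C = Phi mu B \<and> Inv mu (Suc k) B C"
proof -
  define m where "m = nat \<bar>mu\<bar>"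
  define Nn :: "complex poly" where "Nn = of_nat (2*k+1)"
  note I = inv[unfolded Inv_def, folded m_def]
  have A0: "A \<noteq> 0" and B0: "B \<noteq> 0" using I by auto
  have H: "A * pderiv (pderiv B) - 2 * pderiv A * pderiv B + pderiv (pderiv A) * B = 0"
    using I by blast
  have Qe: "A * pderiv (Phi mu B) - 2 * pderiv A * Phi mu B = Nn * A * B^2"
    using I unfolding Nn_def by blast
  have cop: "\<forall>a. a \<noteq> 0 \<and> poly A a = 0 \<longrightarrow> poly B a \<noteq> 0" using I by blast
  have simA: "\<forall>a. a \<noteq> 0 \<longrightarrow> order a A \<le> 1" using I by blast
  have oA: "order 0 A = ordS m k" and oB: "order 0 B = ordS m (Suc k)" using I by auto
  have val: "k \<le> m \<longrightarrow>
       (of_int mu * poly B 0 - poly (pderiv B) 0) * (of_int mu * poly A 0 - poly (pderiv A) 0)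
         = (of_int mu ^ 2 - of_nat k ^ 2) * poly A 0 * poly B 0 \<and>
       (1 \<le> k \<longrightarrow> of_int mu * poly A 0 - poly (pderiv A) 0 \<noteq> 0)" using I by blast
  have k0: "k = 0 \<longrightarrow> A = 1 \<and> B = 1" using I by blast
  have lA: "lead_coeff A = 1" and lB: "lead_coeff B = 1"
    and dA: "degree A = degS k" and dB: "degree B = degS (Suc k)" using I by auto
  have NnD: "pderiv Nn = 0" unfolding Nn_def by (rule pderiv_of_nat)
  have Nn0: "Nn \<noteq> 0" unfolding Nn_def by (metis of_nat_eq_0_iff add_is_0 one_neq_zero)
  have ordle: "order a A \<le> 2 * order a B + 1" for a
  proof (cases "a = 0")
    case True then show ?thesis using oA oB ordS_mono[of m k] by simp
  next
    case False then show ?thesis using simA by fastforce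
  qed
  have "A dvd Phi mu B" by (rule dvd_step[OF A0 B0 Qe NnD Nn0 ordle])
  then obtain C where T: "Phi mu B = A * C" by (metis dvd_def)
  have "A * (A * pderiv C - pderiv A * C) = A * (Nn * B^2)"
    using Qe unfolding T by (simp add: pderiv_mult algebra_simps)
  then have R: "A * pderiv C - pderiv A * C = Nn * B^2" using A0 by simp
  have H1: "B * pderiv (pderiv C) - 2 * pderiv B * pderiv C + pderiv (pderiv B) * C = 0"
    by (rule H_step[OF R NnD H A0])
  have Q1': "B * pderiv (Phi mu C) - 2 * pderiv B * Phi mu C = (Nn + 2) * B * C^2"
    by (rule Q_step[OF R NnD T[symmetric] H1 B0])
  have "Nn + 2 = of_nat (2 * Suc k + 1)" unfolding Nn_def by simp
  with Q1' have Q1: "B * pderiv (Phi mu C) - 2 * pderiv B * Phi mu C = of_nat (2 * Suc k + 1) * B * C^2"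
    by simp
  have pd: "degree (Phi mu B) = 2 * degree B + 1 \<and> lead_coeff (Phi mu B) = lead_coeff B ^ 2"
    by (rule phi_degree[OF B0])
  have P0: "Phi mu B \<noteq> 0" using pd by (metis add_is_0 degree_0 one_neq_zero)
  have C0: "C \<noteq> 0" using P0 T by auto
  have dC: "degree C = degS (Suc (Suc k))"
  proof -
    have "degree A + degree C = 2 * degree B + 1" using pd T A0 C0 by (simp add: degree_mult_eq)
    then show ?thesis using dA dB degS_rec[of k] by simp
  qed
  have lC: "lead_coeff C = 1"
    using pd T lA lB by (simp add: lead_coeff_mult)
  have rootB: "order a B = 1 \<and> poly C a \<noteq> 0" if a0: "a \<noteq> 0" and Ba: "poly B a = 0" for a
  proof -
    have Aa: "poly A a \<noteq> 0" using cop a0 Ba by blast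
    have o1: "order a B = 1" by (rule simple_root[OF B0 H Aa Ba])
    have B1: "pderiv B \<noteq> 0" by (rule pderiv_nz_root[OF B0 Ba])
    have "order a (pderiv B) = 0" using order_pderiv[OF B0 Ba] o1 by simp
    then have "poly (pderiv B) a \<noteq> 0" using B1 order_root by blast
    then have "poly (Phi mu B) a \<noteq> 0" using poly_Phi_root[OF Ba] a0 by simp
    then have "poly C a \<noteq> 0" unfolding T by simp
    with o1 show ?thesis by simp
  qed
  have cop1: "\<forall>a. a \<noteq> 0 \<and> poly B a = 0 \<longrightarrow> poly C a \<noteq> 0" using rootB by blast
  have simB: "\<forall>a. a \<noteq> 0 \<longrightarrow> order a B \<le> 1"
  proof (intro allI impI)
    fix a :: complex assume a0: "a \<noteq> 0"
    show "order a B \<le> 1"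
    proof (cases "poly B a = 0")
      case True then show ?thesis using rootB a0 by simp
    next
      case False then show ?thesis using order_0I[OF False] by simp
    qed
  qed
  have Rw: "[:1:] * (pderiv C * A) + [:-1:] * (C * pderiv A) = Nn * B^2"
    using R by (simp add: algebra_simps)
  have oNB: "order 0 (Nn * B^2) = 2 * ordS m (Suc k)"
  proof -
    have pN: "poly Nn 0 \<noteq> 0" unfolding Nn_def poly_of_nat
      by (metis of_nat_eq_0_iff add_is_0 one_neq_zero)
    have "order 0 Nn = 0" using order_0I[OF pN] .
    then show ?thesis using Nn0 B0 oB by (simp add: order_mult power2_eq_square)
  qed
  define a0 where "a0 = poly A 0"
  define a1 where "a1 = poly (pderiv A) 0"
  define b0 where "b0 = poly B 0"
  define b1 where "b1 = poly (pderiv B) 0"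
  define c0 where "c0 = poly C 0"
  define c1 where "c1 = poly (pderiv C) 0"
  define e where "e = of_int mu * b0 - b1"
  have F1: "a0 * c0 = b0 * e"
    using poly_Phi_0[of mu B] unfolding T a0_def c0_def b0_def b1_def e_def by simp
  have F2: "a0 * c1 - a1 * c0 = of_nat (2*k+1) * b0^2"
    using arg_cong[OF R, of "\<lambda>p. poly p 0"] unfolding Nn_def a0_def a1_def b0_def c0_def c1_def
    by (simp add: of_nat_poly power2_eq_square)
  have oC: "order 0 C = ordS m (Suc (Suc k))"
  proof (cases "k < m")
    case True
    have "ordS m k = 0" "ordS m (Suc k) = 0" "ordS m (Suc (Suc k)) = 0"
      using True by (simp_all add: ordS_small)
    then have a00: "a0 \<noteq> 0" and b00: "b0 \<noteq> 0"
      using oA oB order_eq_0_iff[OF A0, of 0] order_eq_0_iff[OF B0, of 0]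
      unfolding a0_def b0_def by auto
    have V: "e * (of_int mu * a0 - a1) = (of_int mu ^ 2 - of_nat k ^ 2) * a0 * b0"
      using val True unfolding e_def a0_def a1_def b0_def b1_def by simp
    have "of_int mu ^ 2 \<noteq> (of_nat k ^ 2 :: complex)"
    proof
      assume "of_int mu ^ 2 = (of_nat k ^ 2 :: complex)"
      then have "of_int (mu ^ 2) = (of_int (int k ^ 2) :: complex)" by simp
      then have "mu ^ 2 = int k ^ 2" by (simp only: of_int_eq_iff)
      then have "\<bar>mu\<bar>^2 = (int k)^2" by simp
      then have "\<bar>mu\<bar> = int k" using power2_eq_iff_nonneg[of "\<bar>mu\<bar>" "int k"] by simp
      then show False using True unfolding m_def by simp
    qed
    then have "(of_int mu ^ 2 - of_nat k ^ 2) * a0 * b0 \<noteq> 0" using a00 b00 by simp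
    then have "e \<noteq> 0" using V by (metis mult_zero_left)
    then have "b0 * e \<noteq> 0" using b00 by simp
    then have "a0 * c0 \<noteq> 0" using F1 by simp
    then have "c0 \<noteq> 0" by auto
    then have "order 0 C = 0" using order_0I unfolding c0_def by blast
    then show ?thesis using \<open>ordS m (Suc (Suc k)) = 0\<close> by simp
  next
    case False
    show ?thesis
    proof (cases "k = m")
      case km: True
      have o0: "ordS m k = 0" "ordS m (Suc k) = 0" using km by (simp_all add: ordS_small)
      have o1: "ordS m (Suc (Suc k)) = 1" using km by (simp add: ordS_def tri_Suc)
      have oA0: "order 0 A = 0" using oA o0 by simp
      have oB0: "order 0 B = 0" using oB o0 by simp
      have a00: "a0 \<noteq> 0" using oA0 order_eq_0_iff[OF A0, of 0] unfolding a0_def by simp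
      have b00: "b0 \<noteq> 0" using oB0 order_eq_0_iff[OF B0, of 0] unfolding b0_def by simp
      have e0: "e = 0"
      proof (cases "k = 0")
        case True
        then have "A = 1" "B = 1" using k0 by auto
        moreover have "mu = 0" using True km unfolding m_def by simp
        ultimately show ?thesis unfolding e_def b0_def b1_def by simp
      next
        case False
        have V: "e * (of_int mu * a0 - a1) = (of_int mu ^ 2 - of_nat k ^ 2) * a0 * b0"
          and W: "of_int mu * a0 - a1 \<noteq> 0"
          using val km False unfolding e_def a0_def a1_def b0_def b1_def by auto
        have "(of_int mu ^ 2 :: complex) = of_nat k ^ 2"
        proof -
          have "mu ^ 2 = int k ^ 2" using km unfolding m_def by simp
          then have "(of_int (mu ^ 2) :: complex) = of_int (int k ^ 2)" by simp
          then show ?thesis by simp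
        qed
        then have "e * (of_int mu * a0 - a1) = 0" using V by simp
        then show ?thesis using W by simp
      qed
      have c00: "c0 = 0" using F1 e0 a00 by simp
      have oC1: "order 0 C > 0" using order_gt_0_iff[OF C0, of 0] c00 unfolding c0_def by simp
      have cnd: "1 * complex_of_nat (order 0 C) + (-1) * complex_of_nat (order 0 A) \<noteq> 0"
        using oA0 oC1 by simp
      have W: "[:1:] * (pderiv C * A) + [:-1:] * (C * pderiv A) \<noteq> 0 \<and>
          order 0 ([:1:] * (pderiv C * A) + [:-1:] * (C * pderiv A)) = order 0 C + order 0 A - 1"
        by (rule order_wronsk[OF C0 A0 _ cnd]) (use oC1 in simp)
      then have "order 0 C + order 0 A - 1 = 2 * ordS m (Suc k)" using Rw oNB by simp
      then have "order 0 C - 1 = 0" using oA0 o0 by simp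
      then show ?thesis using oC1 o1 by simp
    next
      case kne: False
      with False have km: "k > m" by simp
      have lt: "ordS m k < ordS m (Suc k)" using ordS_strict[OF km] .
      show ?thesis
      proof (cases "order 0 C = order 0 A")
        case True
        obtain r0 where oo: "ordS m (Suc k) = Suc r0" using lt by (metis less_imp_Suc_add)
        have "[:-0,1:]^(order 0 B) dvd B" by (rule order_1)
        then have "pz^(Suc r0) dvd B" using oB oo by (simp add: pz_def)
        then have "pz^(2*r0+1) dvd Phi mu B" by (rule phi_dvd)
        then have dv: "[:-0,1:]^(2*r0+1) dvd A * C" unfolding T by (simp add: pz_def)
        have AC0: "A * C \<noteq> 0" using A0 C0 by simp
        have "2*r0+1 \<le> order 0 (A * C)" using order_divides[of 0 "2*r0+1" "A*C"] dv AC0 by blast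
        also have "\<dots> = order 0 A + order 0 C" using order_mult[OF AC0] .
        finally have "2*r0+1 \<le> 2 * order 0 A" using True by simp
        then show ?thesis using oA oo lt by simp
      next
        case False
        have s1: "order 0 C + order 0 A \<ge> 1" using False by simp
        have cnd: "1 * complex_of_nat (order 0 C) + (-1) * complex_of_nat (order 0 A) \<noteq> 0"
          using False by simp
        have W: "[:1:] * (pderiv C * A) + [:-1:] * (C * pderiv A) \<noteq> 0 \<and>
            order 0 ([:1:] * (pderiv C * A) + [:-1:] * (C * pderiv A)) = order 0 C + order 0 A - 1"
          by (rule order_wronsk[OF C0 A0 s1 cnd])
        then have "order 0 C + order 0 A - 1 = 2 * ordS m (Suc k)" using Rw oNB by simp
        then have "order 0 C + ordS m k = 2 * ordS m (Suc k) + 1" using oA s1 by simp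
        then show ?thesis using ordS_rec[of m k] km by simp
      qed
    qed
  qed
  have val1: "Suc k \<le> m \<longrightarrow>
       (of_int mu * poly C 0 - poly (pderiv C) 0) * (of_int mu * poly B 0 - poly (pderiv B) 0)
         = (of_int mu ^ 2 - of_nat (Suc k) ^ 2) * poly B 0 * poly C 0 \<and>
       (1 \<le> Suc k \<longrightarrow> of_int mu * poly B 0 - poly (pderiv B) 0 \<noteq> 0)"
  proof
    assume Sk: "Suc k \<le> m"
    then have "ordS m k = 0" "ordS m (Suc k) = 0" by (simp_all add: ordS_small)
    then have a00: "a0 \<noteq> 0" and b00: "b0 \<noteq> 0"
      using oA oB order_eq_0_iff[OF A0, of 0] order_eq_0_iff[OF B0, of 0] unfolding a0_def b0_def by auto
    have V: "e * (of_int mu * a0 - a1) = (of_int mu ^ 2 - of_nat k ^ 2) * a0 * b0"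
      using val Sk unfolding e_def a0_def a1_def b0_def b1_def by simp
    have "of_int mu ^ 2 \<noteq> (of_nat k ^ 2 :: complex)"
    proof
      assume "of_int mu ^ 2 = (of_nat k ^ 2 :: complex)"
      then have "of_int (mu ^ 2) = (of_int (int k ^ 2) :: complex)" by simp
      then have "mu ^ 2 = int k ^ 2" by (simp only: of_int_eq_iff)
      then have "\<bar>mu\<bar>^2 = (int k)^2" by simp
      then have "\<bar>mu\<bar> = int k" using power2_eq_iff_nonneg[of "\<bar>mu\<bar>" "int k"] by simp
      then show False using Sk unfolding m_def by simp
    qed
    then have "(of_int mu ^ 2 - of_nat k ^ 2) * a0 * b0 \<noteq> 0" using a00 b00 by simp
    then have e0: "e \<noteq> 0" using V by (metis mult_zero_left)
    define M :: complex where "M = of_int mu"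
    define K :: complex where "K = of_nat k"
    have F2': "a0 * c1 - a1 * c0 = (2*K+1) * b0^2" using F2 unfolding K_def by simp
    have V': "e * (M * a0 - a1) = (M^2 - K^2) * a0 * b0" using V unfolding M_def K_def .
    have X: "a0 * (M * b0 * e - (2*K+1) * b0^2 - a1 * c0 - (M^2 - (K+1)^2) * b0^2) = 0"
    proof -
      have "a0 * (M * b0 * e - (2*K+1) * b0^2 - a1 * c0 - (M^2 - (K+1)^2) * b0^2)
          = b0 * (e * (M * a0 - a1)) - a1 * (a0 * c0 - b0 * e) - (M^2 - K^2) * a0 * b0^2"
        by (simp add: algebra_simps power2_eq_square)
      also have "\<dots> = 0" using V' F1 by (simp add: power2_eq_square)
      finally show ?thesis .
    qed
    then have X': "M * b0 * e - (2*K+1) * b0^2 - a1 * c0 = (M^2 - (K+1)^2) * b0^2" using a00 by simp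
    have "a0 * ((M * c0 - c1) * e - (M^2 - (K+1)^2) * b0 * c0)
        = (M * b0 * e - (2*K+1) * b0^2 - a1 * c0) * e - (M^2 - (K+1)^2) * b0 * (b0 * e)
          + M * e * (a0 * c0 - b0 * e) - e * (a0 * c1 - a1 * c0 - (2*K+1) * b0^2)
          + (M^2 - (K+1)^2) * b0 * (b0 * e - a0 * c0)"
      by (simp add: algebra_simps power2_eq_square)
    also have "\<dots> = 0" using X' F1 F2' by (simp add: power2_eq_square)
    finally have "(M * c0 - c1) * e = (M^2 - (K+1)^2) * b0 * c0" using a00 by simp
    then show "(of_int mu * poly C 0 - poly (pderiv C) 0) * (of_int mu * poly B 0 - poly (pderiv B) 0)
         = (of_int mu ^ 2 - of_nat (Suc k) ^ 2) * poly B 0 * poly C 0 \<and>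
       (1 \<le> Suc k \<longrightarrow> of_int mu * poly B 0 - poly (pderiv B) 0 \<noteq> 0)"
      using e0 unfolding M_def K_def e_def c0_def c1_def b0_def b1_def by (simp add: add.commute)
  qed
  have "Inv mu (Suc k) B C"
    unfolding Inv_def m_def[symmetric]
    using B0 C0 H1 Q1 cop1 simB oB oC val1 lB lC dB dC by simp
  then show ?thesis using T by metis
qed



lemma U_Inv: "\<exists>A B. U mu k = to_fract A \<and> U mu (Suc k) = to_fract B \<and> Inv mu k A B"
proof (induction k)
  case 0
  show ?case using Inv_0[of mu] by (intro exI[of _ 1]) simp
next
  case (Suc k)
  then obtain A B where AB: "U mu k = to_fract A" "U mu (Suc k) = to_fract B" "Inv mu k A B"
    by blast
  obtain C where C: "A * C = Phi mu B" "Inv mu (Suc k) B C" using Inv_step[OF AB(3)] by blast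
  have A0: "A \<noteq> 0" using AB(3) unfolding Inv_def by blast
  have "U mu (Suc (Suc k)) = to_fract C" by (rule U_step[OF AB(1,2) A0 C(1)])
  then show ?case using AB(2) C(2) by blast
qed

lemma tri_int: "int (tri j) = int j * (int j + 1) div 2"
proof -
  have "int (tri j) = int (j * Suc j) div 2" unfolding tri_def by (simp add: zdiv_int)
  then show ?thesis by (simp add: algebra_simps)
qed

theorem theorem4p5:
  fixes mu :: int and n :: int
  assumes "n > \<bar>mu\<bar>"
  shows "\<exists>p :: complex poly.
           Umemura_S mu n = to_fract p \<and>
           order 0 p = nat ((n - \<bar>mu\<bar>) * (n - \<bar>mu\<bar> + 1) div 2) \<and>
           lead_coeff p = 1 \<and>
           degree p = nat (n * (n + 1) div 2) \<and>
           (\<forall>a. a \<noteq> 0 \<and> poly p a = 0 \<longrightarrow> order a p = 1)"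
proof -
  define k where "k = nat (n + 1)"
  define m where "m = nat \<bar>mu\<bar>"
  obtain A B where AB: "U mu k = to_fract A" "Inv mu k A B" using U_Inv[of mu k] by blast
  note I = AB(2)[unfolded Inv_def, folded m_def]
  have A0: "A \<noteq> 0" using I by blast
  have S: "Umemura_S mu n = to_fract A" using AB(1) unfolding Umemura_S_def k_def .
  have n0: "n \<ge> 1" using assms by simp
  have o: "order 0 A = ordS m k" using I by blast
  have "k - Suc m = nat (n - \<bar>mu\<bar>)" unfolding k_def m_def using assms by simp
  then have "int (order 0 A) = (n - \<bar>mu\<bar>) * (n - \<bar>mu\<bar> + 1) div 2"
    using o tri_int[of "nat (n - \<bar>mu\<bar>)"] assms unfolding ordS_def by simp
  then have o': "order 0 A = nat ((n - \<bar>mu\<bar>) * (n - \<bar>mu\<bar> + 1) div 2)" by simp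
  have d: "degree A = degS k" using I by blast
  have "k - 1 = nat n" unfolding k_def using n0 by simp
  then have "int (degree A) = n * (n + 1) div 2"
    using d tri_int[of "nat n"] n0 unfolding degS_def by simp
  then have d': "degree A = nat (n * (n + 1) div 2)" by simp
  have l: "lead_coeff A = 1" using I by blast
  have simp1: "\<forall>a. a \<noteq> 0 \<and> poly A a = 0 \<longrightarrow> order a A = 1"
  proof (intro allI impI)
    fix a :: complex assume a: "a \<noteq> 0 \<and> poly A a = 0"
    have "order a A \<le> 1" using I a by blast
    moreover have "order a A > 0" using order_gt_0_iff[OF A0] a by simp
    ultimately show "order a A = 1" by simp
  qed
  show ?thesis using S o' l d' simp1 by blast
qed


end
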